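(* Let $\nu$ be a vector norm on $\mathbb{R}^n$, let $H=\{x\in\mathbb{R}^n: e^Tx=0\}$ where $e=(1,\ldots,1)^T$, and let $P_1,P_2,\ldots$ be a sequence of $n\times n$ column stochastic matrices. Suppose that $\sum_{i=1}^\infty(\max(\nu^0_H(P_i),1)-1)$ converges and that there is a subsequence $P_{i_1},P_{i_2},\ldots$ for which $\sum_{j=1}^\infty(1-\min(\nu^0_H(P_{i_j}),1))$ diverges. Then all general products formed from the sequence $P_1,P_2,\ldots$ are weakly ergodic.
   Context: A column stochastic matrix is a nonnegative matrix each of whose columns sums to $1$; $H$ is invariant under every such matrix. The coefficient of ergodicity associated with $\nu$ is $\nu^0_H(P)=\sup_{0\ne x\in H}\nu(Px)/\nu(x)$. General products: given a permutation $\sigma$ of the positive integers, set $B_i=P_{\sigma(i)}$; for an integer $p\ge0$ and each $r\ge1$, $C_{p,r}$ is a product of $B_{p+1},\ldots,B_{p+r}$, each used exactly once, in some order (chosen arbitrarily and independently for each $r$). All general products are weakly ergodic if for every such choice of $\sigma$, $p$ and orders, $\lim_{r\to\infty}C_{p,r}x=0$ for all $x\in H$. *)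

theory Defs
  imports "HOL-Analysis.Analysis"
begin

definition is_vector_norm :: "(real^'n \<Rightarrow> real) \<Rightarrow> bool" where
  "is_vector_norm \<nu> \<longleftrightarrow>
     (\<forall>x. 0 \<le> \<nu> x) \<and> (\<forall>x. \<nu> x = 0 \<longleftrightarrow> x = 0) \<and>
     (\<forall>c x. \<nu> (c *\<^sub>R x) = \<bar>c\<bar> * \<nu> x) \<and>
     (\<forall>x y. \<nu> (x + y) \<le> \<nu> x + \<nu> y)"

definition col_stochastic :: "real^'n^'n \<Rightarrow> bool" where
  "col_stochastic P \<longleftrightarrow> (\<forall>i j. 0 \<le> P $ i $ j) \<and> (\<forall>j. (\<Sum>i\<in>UNIV. P $ i $ j) = 1)"

definition Hspace :: "(real^'n) set" where
  "Hspace = {x. (\<Sum>i\<in>UNIV. x $ i) = 0}"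

definition coeff_erg :: "(real^'n \<Rightarrow> real) \<Rightarrow> real^'n^'n \<Rightarrow> real" where
  "coeff_erg \<nu> P = (SUP x \<in> Hspace - {0}. \<nu> (P *v x) / \<nu> x)"

definition ordered_prod :: "(nat \<Rightarrow> real^'n^'n) \<Rightarrow> nat list \<Rightarrow> real^'n^'n" where
  "ordered_prod B ks = foldr (\<lambda>k M. B k ** M) ks (mat 1)"

text \<open>All general products are weakly ergodic (0-based indexing: B_i = P (sigma i),
  C_{p,r} is the product of B_p, ..., B_{p+r-1} in the order given by ord r).\<close>
definition general_products_weakly_ergodic :: "(nat \<Rightarrow> real^'n^'n) \<Rightarrow> bool" where
  "general_products_weakly_ergodic P \<longleftrightarrow>
     (\<forall>\<sigma> p ord. bij \<sigma> \<longrightarrow> (\<forall>r. bij_betw (ord r) {0..<r} {p..<p+r}) \<longrightarrow>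
        (\<forall>x\<in>Hspace.
           (\<lambda>r. ordered_prod (\<lambda>i. P (\<sigma> i)) (map (ord r) [0..<r]) *v x) \<longlonglongrightarrow> 0))"

end

theory Submission
  imports Defs
begin


lemma nu_zero: "is_vector_norm \<nu> \<Longrightarrow> \<nu> 0 = 0"
  unfolding is_vector_norm_def by blast

lemma nu_sum: assumes "is_vector_norm \<nu>" "finite A"
  shows "\<nu> (sum f A) \<le> (\<Sum>i\<in>A. \<nu> (f i))"
  using assms(2)
proof (induction A rule: finite_induct)
  case empty then show ?case using nu_zero[OF assms(1)] by simp
next
  case (insert a A)
  have "\<nu> (sum f (insert a A)) = \<nu> (f a + sum f A)" using insert by simp
  also have "\<dots> \<le> \<nu> (f a) + \<nu> (sum f A)" using assms(1) unfolding is_vector_norm_def by blast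
  finally show ?case using insert by simp
qed

lemma nu_upper: assumes "is_vector_norm (\<nu>::real^'n \<Rightarrow> real)"
  shows "\<exists>K. \<forall>x. \<nu> x \<le> K * norm x"
proof -
  let ?K = "\<Sum>b\<in>Basis. \<nu> (b :: real^'n)"
  have "\<nu> x \<le> ?K * norm x" for x
  proof -
    have "\<nu> x = \<nu> (\<Sum>b\<in>Basis. inner x b *\<^sub>R b)" by (simp add: euclidean_representation)
    also have "\<dots> \<le> (\<Sum>b\<in>Basis. \<nu> (inner x b *\<^sub>R b))" by (rule nu_sum[OF assms]) simp
    also have "\<dots> = (\<Sum>b\<in>Basis. \<bar>inner x b\<bar> * \<nu> b)" using assms unfolding is_vector_norm_def by simp
    also have "\<dots> \<le> (\<Sum>b\<in>Basis. norm x * \<nu> b)"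
      apply (rule sum_mono) apply (rule mult_right_mono)
      using assms Basis_le_norm unfolding is_vector_norm_def by auto
    also have "\<dots> = ?K * norm x" by (simp add: sum_distrib_left mult.commute)
    finally show ?thesis .
  qed
  then show ?thesis by blast
qed

lemma nu_lower: assumes "is_vector_norm (\<nu>::real^'n \<Rightarrow> real)"
  shows "\<exists>k>0. \<forall>x. k * norm x \<le> \<nu> x"
proof -
  obtain K where K: "\<And>x. \<nu> x \<le> K * norm x" using nu_upper[OF assms] by blast
  have tri: "\<nu> (x + y) \<le> \<nu> x + \<nu> y" for x y using assms unfolding is_vector_norm_def by blast
  have neg: "\<nu> (- x) = \<nu> x" for x using assms unfolding is_vector_norm_def
    by (metis abs_minus_cancel abs_one mult_1 scaleR_minus1_left)
  have lip: "\<bar>\<nu> x - \<nu> y\<bar> \<le> K * norm (x - y)" for x y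
  proof -
    have "\<nu> x \<le> \<nu> y + \<nu> (x - y)" using tri[of y "x - y"] by simp
    moreover have "\<nu> y \<le> \<nu> x + \<nu> (y - x)" using tri[of x "y - x"] by simp
    moreover have "\<nu> (y - x) = \<nu> (x - y)" using neg[of "x - y"] by simp
    ultimately show ?thesis using K[of "x - y"] by linarith
  qed
  have cont: "continuous_on UNIV \<nu>"
  proof (rule continuous_on_iff[THEN iffD2], intro ballI allI impI)
    fix x :: "real^'n" and e :: real assume e: "0 < e"
    have K0: "K \<ge> 0" using K[of "axis undefined 1"] assms unfolding is_vector_norm_def
      by (metis mult_le_0_iff norm_ge_zero order_trans linorder_not_le zero_le_mult_iff zero_less_norm_iff axis_nth zero_neq_one vec_eq_iff zero_index)
    show "\<exists>d>0. \<forall>x'\<in>UNIV. dist x' x < d \<longrightarrow> dist (\<nu> x') (\<nu> x) < e"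
    proof (intro exI[of _ "e / (K + 1)"] conjI ballI impI)
      show "0 < e / (K + 1)" using e K0 by simp
      fix y assume "dist y x < e / (K + 1)"
      then have "(K+1) * norm (y - x) < e" using K0 by (simp add: dist_norm field_simps)
      moreover have "\<bar>\<nu> y - \<nu> x\<bar> \<le> K * norm (y - x)" by (rule lip)
      moreover have "K * norm (y - x) \<le> (K+1) * norm (y - x)" by (simp add: mult_right_mono)
      ultimately show "dist (\<nu> y) (\<nu> x) < e" by (simp add: dist_real_def)
    qed
  qed
  have "compact (sphere (0::real^'n) 1)" by simp
  moreover have "sphere (0::real^'n) 1 \<noteq> {}" by simp
  ultimately obtain z where z: "z \<in> sphere 0 1" "\<And>y. y \<in> sphere 0 1 \<Longrightarrow> \<nu> z \<le> \<nu> y"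
    using continuous_attains_inf[of "sphere (0::real^'n) 1" \<nu>] continuous_on_subset[OF cont] by blast
  have "z \<noteq> 0" using z by auto
  then have zpos: "\<nu> z > 0" using assms unfolding is_vector_norm_def by (metis less_le)
  have "\<nu> z * norm x \<le> \<nu> x" for x
  proof (cases "x = 0")
    case True then show ?thesis using nu_zero[OF assms] by simp
  next
    case False
    have "\<nu> z \<le> \<nu> ((1 / norm x) *\<^sub>R x)" using z(2) False by simp
    also have "\<dots> = \<nu> x / norm x" using assms unfolding is_vector_norm_def by simp
    finally show ?thesis using False by (simp add: field_simps)
  qed
  then show ?thesis using zpos by blast
qed



lemma H_inv: assumes "col_stochastic P" "x \<in> Hspace" shows "P *v x \<in> Hspace"
proof -
  have "(\<Sum>i\<in>UNIV. (P *v x) $ i) = (\<Sum>i\<in>UNIV. \<Sum>j\<in>UNIV. P $ i $ j * x $ j)"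
    by (simp add: matrix_vector_mult_def)
  also have "\<dots> = (\<Sum>j\<in>UNIV. \<Sum>i\<in>UNIV. P $ i $ j * x $ j)" by (rule sum.swap)
  also have "\<dots> = (\<Sum>j\<in>UNIV. (\<Sum>i\<in>UNIV. P $ i $ j) * x $ j)" by (simp add: sum_distrib_right)
  also have "\<dots> = (\<Sum>j\<in>UNIV. x $ j)" using assms(1) unfolding col_stochastic_def by simp
  also have "\<dots> = 0" using assms(2) unfolding Hspace_def by simp
  finally show ?thesis unfolding Hspace_def by simp
qed

lemma coeff_bound: fixes \<nu> :: "real^'n \<Rightarrow> real" assumes nu: "is_vector_norm \<nu>" and x: "x \<in> Hspace"
  shows "\<nu> (P *v x) \<le> coeff_erg \<nu> P * \<nu> x"
proof (cases "x = 0")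
  case True then show ?thesis using nu_zero[OF nu] by simp
next
  case False
  obtain K where K: "\<And>x. \<nu> x \<le> K * norm x" using nu_upper[OF nu] by blast
  obtain k where k: "k > 0" "\<And>x. k * norm x \<le> \<nu> x" using nu_lower[OF nu] by blast
  obtain B where B: "\<And>x. norm (P *v x) \<le> norm x * B"
    using bounded_linear.bounded[OF matrix_vector_mul_bounded_linear[of P]] by blast
  have bdd: "bdd_above ((\<lambda>x. \<nu> (P *v x) / \<nu> x) ` (Hspace - {0}))"
  proof (rule bdd_aboveI2)
    fix y :: "real^'n" assume y: "y \<in> Hspace - {0}"
    then have ny: "norm y > 0" by simp
    have vy: "\<nu> y \<ge> k * norm y" by (rule k(2))
    have vyp: "\<nu> y > 0" using vy k ny by (smt (verit) mult_pos_pos)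
    have "\<nu> (P *v y) \<le> K * (norm y * B)"
    proof -
      have "K \<ge> 0" using K[of y] vyp ny by (smt (verit) mult_nonpos_nonneg norm_ge_zero)
      then show ?thesis using K[of "P *v y"] B[of y] by (smt (verit) mult_left_mono)
    qed
    also have "\<dots> = (K * B / k) * (k * norm y)" using k by (simp add: field_simps)
    also have "\<dots> \<le> (\<bar>K * B\<bar> / k) * \<nu> y"
      apply (rule mult_mono) using k vy ny by (auto simp: divide_right_mono)
    finally show "\<nu> (P *v y) / \<nu> y \<le> \<bar>K * B\<bar> / k" using vyp by (simp add: divide_simps)
  qed
  have "\<nu> (P *v x) / \<nu> x \<le> coeff_erg \<nu> P"
    unfolding coeff_erg_def apply (rule cSUP_upper[OF _ bdd]) using x False by simp
  moreover have "\<nu> x > 0" using False nu unfolding is_vector_norm_def by (metis less_le)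
  ultimately show ?thesis by (simp add: divide_simps mult.commute)
qed

lemma coeff_nonneg: fixes \<nu> :: "real^'n \<Rightarrow> real" assumes nu: "is_vector_norm \<nu>" and z: "z \<in> (Hspace :: (real^'n) set)" "z \<noteq> 0"
  shows "coeff_erg \<nu> P \<ge> 0"
proof -
  have "\<nu> z > 0" using z nu unfolding is_vector_norm_def by (metis less_le)
  moreover have "\<nu> (P *v z) \<ge> 0" using nu unfolding is_vector_norm_def by blast
  moreover note coeff_bound[OF nu z(1), of P]
  ultimately show ?thesis
  proof -
    assume a: "\<nu> z > 0" "\<nu> (P *v z) \<ge> 0" "\<nu> (P *v z) \<le> coeff_erg \<nu> P * \<nu> z"
    show ?thesis
    proof (rule ccontr)
      assume "\<not> 0 \<le> coeff_erg \<nu> P"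
      then have "coeff_erg \<nu> P * \<nu> z < 0" using a(1) by (simp add: mult_neg_pos)
      then show False using a by linarith
    qed
  qed
qed

lemma prod_bound:
  assumes nu: "is_vector_norm \<nu>" and st: "\<And>k. col_stochastic (B k)"
    and cnn: "\<And>k. coeff_erg \<nu> (B k) \<ge> 0" and x: "x \<in> Hspace"
  shows "ordered_prod B ks *v x \<in> Hspace \<and>
         \<nu> (ordered_prod B ks *v x) \<le> (\<Prod>k\<leftarrow>ks. coeff_erg \<nu> (B k)) * \<nu> x"
proof (induction ks)
  case Nil then show ?case using x by (simp add: ordered_prod_def)
next
  case (Cons a ks)
  let ?y = "ordered_prod B ks *v x"
  have eq: "ordered_prod B (a # ks) *v x = B a *v ?y"
    by (simp add: ordered_prod_def matrix_vector_mul_assoc)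
  have "\<nu> (B a *v ?y) \<le> coeff_erg \<nu> (B a) * \<nu> ?y" using coeff_bound[OF nu] Cons by blast
  also have "\<dots> \<le> coeff_erg \<nu> (B a) * ((\<Prod>k\<leftarrow>ks. coeff_erg \<nu> (B k)) * \<nu> x)"
    using Cons cnn mult_left_mono by blast
  finally show ?case using eq H_inv[OF st] Cons by (simp add: mult.assoc)
qed



lemma S_top:
  fixes c :: "nat \<Rightarrow> real"
  assumes sig: "bij \<sigma>" and s: "strict_mono s"
    and ns: "\<not> summable (\<lambda>j. 1 - min (c (s j)) 1)"
  shows "filterlim (\<lambda>r. \<Sum>k\<in>{p..<p+r}. 1 - min (c (\<sigma> k)) 1) at_top sequentially"
  unfolding filterlim_at_top
proof
  fix Z :: real
  let ?d = "\<lambda>j. 1 - min (c (s j)) 1"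
  let ?e = "\<lambda>k. 1 - min (c (\<sigma> k)) 1"
  let ?A = "\<Sum>k\<in>{0..<p}. ?e k"
  have "\<exists>J. (\<Sum>j<J. ?d j) > Z + ?A"
  proof (rule ccontr)
    assume "\<not> ?thesis"
    then have b: "\<And>J. (\<Sum>j<J. ?d j) \<le> Z + ?A" by (simp add: not_less)
    have "summable ?d" by (rule summableI_nonneg_bounded[where x="Z + ?A"], simp, rule b)
    with ns show False by blast
  qed
  then obtain J where J: "(\<Sum>j<J. ?d j) > Z + ?A" by blast
  define \<tau> where "\<tau> = inv \<sigma>"
  have st: "\<sigma> (\<tau> y) = y" for y unfolding \<tau>_def using sig by (simp add: bij_is_surj surj_f_inv_f)
  have injt: "inj \<tau>" unfolding \<tau>_def using sig bij_imp_bij_inv bij_is_inj by blast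
  have injs: "inj s" using s strict_mono_imp_inj_on by blast
  have inj: "inj_on (\<lambda>j. \<tau> (s j)) {..<J}" using injt injs unfolding inj_on_def by blast
  define R where "R = Max ((\<lambda>j. \<tau> (s j)) ` {..<J})"
  have le: "\<tau> (s j) \<le> R" if "j < J" for j unfolding R_def using that by (intro Max_ge) simp_all
  show "eventually (\<lambda>r. Z \<le> (\<Sum>k\<in>{p..<p+r}. ?e k)) sequentially"
    unfolding eventually_sequentially
  proof (intro exI[of _ "Suc R"] allI impI)
    fix r assume r: "Suc R \<le> r"
    have "(\<Sum>j<J. ?d j) = (\<Sum>j<J. ?e (\<tau> (s j)))" by (simp add: st)
    also have "\<dots> = (\<Sum>k\<in>(\<lambda>j. \<tau> (s j)) ` {..<J}. ?e k)" using sum.reindex[OF inj, of ?e] by (simp add: comp_def)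
    also have "\<dots> \<le> (\<Sum>k\<in>{0..<p+r}. ?e k)"
      apply (rule sum_mono2) apply simp using le r apply fastforce by simp
    also have "\<dots> = ?A + (\<Sum>k\<in>{p..<p+r}. ?e k)" by (rule sum.atLeastLessThan_concat[symmetric]) simp_all
    finally show "Z \<le> (\<Sum>k\<in>{p..<p+r}. ?e k)" using J by linarith
  qed
qed



theorem theorem4p3:
  fixes \<nu> :: "real^'n \<Rightarrow> real" and P :: "nat \<Rightarrow> real^'n^'n"
  assumes "is_vector_norm \<nu>"
    and "\<And>i. col_stochastic (P i)"
    and "summable (\<lambda>i. max (coeff_erg \<nu> (P i)) 1 - 1)"
    and "strict_mono s"
    and "\<not> summable (\<lambda>j. 1 - min (coeff_erg \<nu> (P (s j))) 1)"
  shows "general_products_weakly_ergodic P"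
  unfolding general_products_weakly_ergodic_def
proof (intro allI impI ballI)
  fix \<sigma> :: "nat \<Rightarrow> nat" and p :: nat and ord :: "nat \<Rightarrow> nat \<Rightarrow> nat" and x :: "real^'n"
  assume sig: "bij \<sigma>" and ordb: "\<forall>r. bij_betw (ord r) {0..<r} {p..<p+r}" and x: "x \<in> Hspace"
  note nu = assms(1)
  let ?C = "\<lambda>r. ordered_prod (\<lambda>i. P (\<sigma> i)) (map (ord r) [0..<r])"
  show "(\<lambda>r. ?C r *v x) \<longlonglongrightarrow> 0"
  proof (cases "x = 0")
    case True then show ?thesis by simp
  next
    case False
    define c where "c i = coeff_erg \<nu> (P i)" for i
    have cnn: "c i \<ge> 0" for i unfolding c_def using coeff_nonneg[OF nu x False] .
    define m where "m i = max (c i) 1 - 1" for i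
    have msum: "summable m" using assms(3) unfolding m_def c_def .
    have m0: "m i \<ge> 0" for i unfolding m_def by simp
    define t where "t k = min (c (\<sigma> k)) 1" for k
    define S where "S r = (\<Sum>k\<in>{p..<p+r}. 1 - t k)" for r
    have Stop: "filterlim S at_top sequentially"
      unfolding S_def t_def using S_top[OF sig assms(4), of c p] assms(5) unfolding c_def by simp
    obtain k0 where k0: "k0 > 0" "\<And>y. k0 * norm y \<le> \<nu> y" using nu_lower[OF nu] by blast
    have bound: "norm (?C r *v x) \<le> (exp (suminf m) * \<nu> x / k0) * exp (- S r)" for r
    proof -
      let ?F = "{p..<p+r}"
      have bij: "bij_betw (ord r) {0..<r} ?F" using ordb by blast
      have setl: "set (map (ord r) [0..<r]) = ?F" using bij bij_betw_imp_surj_on by fastforce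
      have dist: "distinct (map (ord r) [0..<r])"
        using bij bij_betw_imp_inj_on by (simp add: distinct_map)
      have "\<nu> (?C r *v x) \<le> (\<Prod>k\<leftarrow>map (ord r) [0..<r]. coeff_erg \<nu> (P (\<sigma> k))) * \<nu> x"
        using prod_bound[where B="\<lambda>i. P (\<sigma> i)", OF nu assms(2) _ x] cnn unfolding c_def by blast
      also have "(\<Prod>k\<leftarrow>map (ord r) [0..<r]. coeff_erg \<nu> (P (\<sigma> k))) = (\<Prod>k\<in>?F. c (\<sigma> k))"
        using prod.distinct_set_conv_list[OF dist, of "\<lambda>k. c (\<sigma> k)"] setl unfolding c_def by simp
      also have "(\<Prod>k\<in>?F. c (\<sigma> k)) = (\<Prod>k\<in>?F. max (c (\<sigma> k)) 1) * (\<Prod>k\<in>?F. t k)"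
        unfolding t_def prod.distrib[symmetric] by (rule prod.cong) (auto simp: max_def min_def)
      also have "\<dots> \<le> exp (suminf m) * exp (- S r)"
      proof (rule mult_mono)
        have "(\<Prod>k\<in>?F. max (c (\<sigma> k)) 1) \<le> (\<Prod>k\<in>?F. exp (m (\<sigma> k)))"
        proof (rule prod_mono)
          fix k show "0 \<le> max (c (\<sigma> k)) 1 \<and> max (c (\<sigma> k)) 1 \<le> exp (m (\<sigma> k))"
            unfolding m_def using exp_ge_add_one_self[of "max (c (\<sigma> k)) 1 - 1"] by simp
        qed
        also have "\<dots> = exp (\<Sum>k\<in>?F. m (\<sigma> k))" by (simp add: exp_sum)
        also have "(\<Sum>k\<in>?F. m (\<sigma> k)) = (\<Sum>i\<in>\<sigma> ` ?F. m i)"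
          proof -
          have "inj_on \<sigma> ?F" using sig bij_is_inj inj_on_subset by blast
          then show ?thesis using sum.reindex[of \<sigma> ?F m] by (simp add: comp_def)
        qed
        also have "\<dots> \<le> suminf m" by (rule sum_le_suminf[OF msum]) (simp_all add: m0)
        finally show "(\<Prod>k\<in>?F. max (c (\<sigma> k)) 1) \<le> exp (suminf m)" by simp
        have "(\<Prod>k\<in>?F. t k) \<le> (\<Prod>k\<in>?F. exp (- (1 - t k)))"
        proof (rule prod_mono)
          fix k show "0 \<le> t k \<and> t k \<le> exp (- (1 - t k))"
            unfolding t_def using exp_ge_add_one_self[of "- (1 - min (c (\<sigma> k)) 1)"] cnn[of "\<sigma> k"] by simp
        qed
        also have "\<dots> = exp (- S r)" unfolding S_def by (simp add: exp_sum[symmetric] sum_negf[symmetric])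
        finally show "(\<Prod>k\<in>?F. t k) \<le> exp (- S r)" .
        show "0 \<le> (\<Prod>k\<in>?F. t k)" unfolding t_def using cnn by (simp add: prod_nonneg)
        show "0 \<le> exp (suminf m)" by simp
      qed
      finally have "\<nu> (?C r *v x) \<le> exp (suminf m) * exp (- S r) * \<nu> x"
        using nu unfolding is_vector_norm_def by (meson mult_right_mono order_trans)
      then show ?thesis using k0(2)[of "?C r *v x"] k0(1) by (simp add: field_simps)
    qed
    have "(\<lambda>r. exp (- S r)) \<longlonglongrightarrow> 0"
      using filterlim_compose[OF exp_at_bot filterlim_compose[OF filterlim_uminus_at_bot_at_top Stop]]
      by (simp add: comp_def)
    then have "(\<lambda>r. (exp (suminf m) * \<nu> x / k0) * exp (- S r)) \<longlonglongrightarrow> 0"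
      by (rule tendsto_mult_right_zero)
    then show ?thesis
      by (rule Lim_null_comparison[rotated]) (use bound in simp)
  qed
qed

end
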